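(* Let $\Phi\subset K$ be nested convex polygons in $\mathbb{R}^2$. For each side $s_i$ of $\Phi$, with outward normal $\nu_i$, let $v_i$ be any vertex of $K$ maximizing $\langle\cdot,\nu_i\rangle$ over $K$, and let $C_i=\operatorname{conv}(\{v_i\}\cup s_i)$ (a possibly degenerate triangle, called the cap based on $s_i$). Then the caps $C_i$ based on all sides of $\Phi$ have pairwise disjoint interiors. *)

theory Defs
  imports "HOL-Analysis.Analysis"
begin

definition convex_polygon :: "(real^2) set \<Rightarrow> bool" where
  "convex_polygon P \<longleftrightarrow> polytope P \<and> interior P \<noteq> {}"

definition side_of :: "(real^2) set \<Rightarrow> (real^2) set \<Rightarrow> bool" where
  "side_of s P \<longleftrightarrow> s face_of P \<and> aff_dim s = 1"

definition outward_normal :: "(real^2) set \<Rightarrow> (real^2) set \<Rightarrow> real^2 \<Rightarrow> bool" where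
  "outward_normal P s nu \<longleftrightarrow> norm nu = 1 \<and> (\<forall>x\<in>s. \<forall>y\<in>P. y \<bullet> nu \<le> x \<bullet> nu)"

definition cap :: "real^2 \<Rightarrow> (real^2) set \<Rightarrow> (real^2) set" where
  "cap v s = convex hull (insert v s)"

end

theory Submission
  imports Defs
begin

lemma key_ineq:
  fixes l m P X Y Vs Vt :: real
  assumes "0 \<le> l" "l \<le> 1" "0 \<le> m" "m \<le> 1"
    and "P = l * Vs + (1-l) * X" "P = m * Vt + (1-m) * Y"
    and "Vt \<le> Vs" "Y \<le> X" "X < P"
  shows "l \<le> m"
proof (rule ccontr)
  assume "\<not> l \<le> m"
  hence lm: "m < l" by simp
  have "0 < l" using assms lm by linarith
  have "0 < m"
  proof (rule ccontr)
    assume "\<not> 0 < m" hence "m = 0" using assms by simp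
    thus False using assms by simp
  qed
  have e1: "P - Y = m * (Vt - Y)" using assms(6) by (simp add: algebra_simps)
  have "l * (P - Y) = l * m * (Vt - Y)" by (simp add: e1)
  also have "\<dots> \<le> l * m * (Vs - Y)" using assms \<open>0<l\<close> \<open>0<m\<close> by (intro mult_left_mono) auto
  finally have A: "l * (P - Y) \<le> l * m * (Vs - Y)" .
  have e2: "P - X = l * (Vs - X)" using assms(5) by (simp add: algebra_simps)
  have B: "m * (P - X) = l * m * (Vs - X)" by (simp add: e2)
  from A B have "l * (P - Y) - m * (P - X) \<le> l * m * (X - Y)" by (simp add: algebra_simps)
  moreover have "l * (P - Y) - m * (P - X) = (l - m) * (P - X) + l * (X - Y)" by (simp add: algebra_simps)
  moreover have "(l - m) * (P - X) > 0" using lm assms by simp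
  moreover have "l * (X - Y) \<ge> l * m * (X - Y)"
    using assms \<open>0<l\<close> by (simp add: mult_left_le mult_right_mono)
  ultimately show False by linarith
qed

lemma key_eq:
  fixes l P X Y Vs Vt :: real
  assumes "0 \<le> l" "l \<le> 1"
    and "P = l * Vs + (1-l) * X" "P = l * Vt + (1-l) * Y"
    and "Vt \<le> Vs" "Y \<le> X"
  shows "l = 1 \<or> X = Y"
proof -
  have "l * (Vs - Vt) + (1 - l) * (X - Y) = 0" using assms(3,4) by (simp add: algebra_simps)
  moreover have "l * (Vs - Vt) \<ge> 0" using assms by simp
  moreover have "(1 - l) * (X - Y) \<ge> 0" using assms by simp
  ultimately have "(1 - l) * (X - Y) = 0" by linarith
  thus ?thesis by simp
qed

lemma side_level:
  assumes "side_of s P" "outward_normal P s n" "convex P" "y \<in> P" "x \<in> s" "y \<bullet> n = x \<bullet> n"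
  shows "y \<in> s"
proof -
  have sf: "s face_of P" and sd: "aff_dim s = 1" using assms(1) side_of_def by auto
  have n0: "n \<noteq> 0" using assms(2) outward_normal_def by auto
  have le: "\<And>z. z \<in> P \<Longrightarrow> n \<bullet> z \<le> n \<bullet> x"
    using assms(2,5) unfolding outward_normal_def by (metis inner_commute)
  define F where "F = P \<inter> {z. n \<bullet> z = n \<bullet> x}"
  have Ff: "F face_of P" unfolding F_def
    by (rule face_of_Int_supporting_hyperplane_le[OF assms(3) le])
  have sF: "s \<subseteq> F"
  proof
    fix z assume "z \<in> s"
    hence "z \<in> P" using sf face_of_imp_subset by blast
    moreover have "n \<bullet> z \<le> n \<bullet> x" using le \<open>z \<in> P\<close> .
    moreover have "n \<bullet> x \<le> n \<bullet> z" using assms(2) \<open>z \<in> s\<close> assms(5) sf face_of_imp_subset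
      by (fastforce simp add: outward_normal_def inner_commute)
    ultimately show "z \<in> F" unfolding F_def by auto
  qed
  have "s face_of F" using face_of_subset[OF sf sF] F_def by auto
  moreover have "convex F" using Ff face_of_imp_convex by blast
  moreover have "aff_dim F \<le> 1"
  proof -
    have "aff_dim F \<le> aff_dim {z. n \<bullet> z = n \<bullet> x}" unfolding F_def by (rule aff_dim_subset) auto
    thus ?thesis using n0 by simp
  qed
  ultimately have "s = F" using face_of_aff_dim_lt sd by fastforce
  moreover have "y \<in> F" unfolding F_def using assms(4,6) by (simp add: inner_commute)
  ultimately show ?thesis by simp
qed

lemma cap_beyond:
  fixes s :: "(real^2) set"
  assumes "outward_normal P s n" "s \<subseteq> P" "\<forall>x\<in>s. x \<bullet> n \<le> w \<bullet> n"
    "p \<in> interior (cap w s)" "x0 \<in> s"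
  shows "x0 \<bullet> n < p \<bullet> n"
proof -
  have n0: "n \<noteq> 0" using assms(1) outward_normal_def by auto
  have "cap w s \<subseteq> {z. n \<bullet> z \<ge> n \<bullet> x0}"
    unfolding cap_def
  proof (rule hull_minimal)
    show "convex {z. n \<bullet> z \<ge> n \<bullet> x0}" by (rule convex_halfspace_ge)
    show "insert w s \<subseteq> {z. n \<bullet> z \<ge> n \<bullet> x0}"
    proof
      fix z assume "z \<in> insert w s"
      then consider "z = w" | "z \<in> s" by auto
      then show "z \<in> {z. n \<bullet> z \<ge> n \<bullet> x0}"
      proof cases
        case 1
        have "x0 \<bullet> n \<le> w \<bullet> n" using assms(3,5) by blast
        then show ?thesis using 1 by (simp add: inner_commute)
      next
        case 2
        have "x0 \<bullet> n \<le> z \<bullet> n" using assms(1,2,5) 2 unfolding outward_normal_def by blast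
        then show ?thesis by (simp add: inner_commute)
      qed
    qed
  qed
  hence "interior (cap w s) \<subseteq> interior {z. n \<bullet> z \<ge> n \<bullet> x0}"
    by (rule interior_mono)
  also have "\<dots> = {z. n \<bullet> z > n \<bullet> x0}" using n0 by (rule interior_halfspace_ge)
  finally have "n \<bullet> x0 < n \<bullet> p" using assms(4) by blast
  thus ?thesis by (simp add: inner_commute)
qed

lemma cap_decomp:
  assumes "side_of s P" "p \<in> cap w s"
  obtains l x where "0 \<le> l" "l \<le> 1" "x \<in> s" "p = l *\<^sub>R w + (1 - l) *\<^sub>R x"
proof -
  have sf: "s face_of P" and sd: "aff_dim s = 1" using assms(1) side_of_def by auto
  have "s \<noteq> {}" using sd by auto
  have cs: "convex s" using sf face_of_imp_convex by blast
  from assms(2) obtain u u' b where "u \<ge> 0" "u' \<ge> 0" "u + u' = 1" "b \<in> s"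
    "p = u *\<^sub>R w + u' *\<^sub>R b"
    unfolding cap_def convex_hull_insert[OF \<open>s \<noteq> {}\<close>] convex_hull_eq[THEN iffD2, OF cs] by blast
  moreover have "u' = 1 - u" using \<open>u + u' = 1\<close> by simp
  ultimately show ?thesis using that[of u b] by simp
qed

theorem lemma7p1:
  fixes Phi K :: "(real^2) set"
    and nu v :: "(real^2) set \<Rightarrow> real^2"
  assumes "convex_polygon Phi" and "convex_polygon K" and "Phi \<subseteq> K"
    and "\<And>s. side_of s Phi \<Longrightarrow> outward_normal Phi s (nu s)"
    and "\<And>s. side_of s Phi \<Longrightarrow> v s extreme_point_of K"
    and "\<And>s. side_of s Phi \<Longrightarrow> \<forall>y\<in>K. y \<bullet> nu s \<le> v s \<bullet> nu s"
  shows "\<forall>s t. side_of s Phi \<and> side_of t Phi \<and> s \<noteq> t \<longrightarrow>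
           interior (cap (v s) s) \<inter> interior (cap (v t) t) = {}"
proof (intro allI impI)
  fix s t assume H: "side_of s Phi \<and> side_of t Phi \<and> s \<noteq> t"
  hence ss: "side_of s Phi" and st: "side_of t Phi" and neq: "s \<noteq> t" by auto
  have cP: "convex Phi" using assms(1) convex_polygon_def polytope_imp_convex by blast
  have sf: "s face_of Phi" and sd: "aff_dim s = 1" using ss side_of_def by auto
  have tf: "t face_of Phi" and td: "aff_dim t = 1" using st side_of_def by auto
  have sP: "s \<subseteq> Phi" and tP: "t \<subseteq> Phi" using sf tf face_of_imp_subset by auto
  have cs: "convex s" and ct: "convex t" using sf tf face_of_imp_convex by auto
  have ons: "outward_normal Phi s (nu s)" and ont: "outward_normal Phi t (nu t)"
    using assms(4) ss st by auto
  have vsK: "v s \<in> K" and vtK: "v t \<in> K" using assms(5)[OF ss] assms(5)[OF st] by (meson extreme_point_of_def)+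
  have maxs: "\<forall>y\<in>K. y \<bullet> nu s \<le> v s \<bullet> nu s" and maxt: "\<forall>y\<in>K. y \<bullet> nu t \<le> v t \<bullet> nu t"
    using assms(6) ss st by auto
  define T where "T = convex hull (insert (v s) (s \<inter> t))"
  define U where "U = interior (cap (v s) s) \<inter> interior (cap (v t) t)"
  have UT: "U \<subseteq> T"
  proof
    fix p assume pU: "p \<in> U"
    show "p \<in> T"
    proof (cases "p = v s")
      case True then show ?thesis unfolding T_def by (simp add: hull_inc)
    next
      case False
      have ps: "p \<in> cap (v s) s" and pt: "p \<in> cap (v t) t"
        using pU U_def interior_subset by auto
      obtain l x where l: "0 \<le> l" "l \<le> 1" "x \<in> s" "p = l *\<^sub>R v s + (1 - l) *\<^sub>R x"
        using cap_decomp[OF ss ps] by blast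
      obtain m y where m: "0 \<le> m" "m \<le> 1" "y \<in> t" "p = m *\<^sub>R v t + (1 - m) *\<^sub>R y"
        using cap_decomp[OF st pt] by blast
      have xP: "x \<in> Phi" and yP: "y \<in> Phi" using l m sP tP by auto
      have bs: "x \<bullet> nu s < p \<bullet> nu s"
        by (rule cap_beyond[OF ons sP _ _ l(3)]) (use maxs sP assms(3) pU U_def in auto)
      have bt: "y \<bullet> nu t < p \<bullet> nu t"
        by (rule cap_beyond[OF ont tP _ _ m(3)]) (use maxt tP assms(3) pU U_def in auto)
      have e1: "p \<bullet> nu s = l * (v s \<bullet> nu s) + (1 - l) * (x \<bullet> nu s)"
        using l(4) by (simp add: inner_add_left)
      have e2: "p \<bullet> nu s = m * (v t \<bullet> nu s) + (1 - m) * (y \<bullet> nu s)"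
        using m(4) by (simp add: inner_add_left)
      have e3: "p \<bullet> nu t = l * (v s \<bullet> nu t) + (1 - l) * (x \<bullet> nu t)"
        using l(4) by (simp add: inner_add_left)
      have e4: "p \<bullet> nu t = m * (v t \<bullet> nu t) + (1 - m) * (y \<bullet> nu t)"
        using m(4) by (simp add: inner_add_left)
      have i1: "v t \<bullet> nu s \<le> v s \<bullet> nu s" using maxs vtK by auto
      have i2: "v s \<bullet> nu t \<le> v t \<bullet> nu t" using maxt vsK by auto
      have i3: "y \<bullet> nu s \<le> x \<bullet> nu s" using ons yP l(3) unfolding outward_normal_def by blast
      have i4: "x \<bullet> nu t \<le> y \<bullet> nu t" using ont xP m(3) unfolding outward_normal_def by blast
      have lm: "l \<le> m" by (rule key_ineq[OF l(1,2) m(1,2) e1 e2 i1 i3 bs])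
      have ml: "m \<le> l" by (rule key_ineq[OF m(1,2) l(1,2) e4 e3 i2 i4 bt])
      have "m = 1 \<or> y \<bullet> nu t = x \<bullet> nu t"
        by (rule key_eq[OF m(1,2) e4]) (use e3 lm ml i2 i4 in auto)
      moreover have "m \<noteq> 1" using False l(4) lm ml by auto
      ultimately have "x \<bullet> nu t = y \<bullet> nu t" by simp
      hence "x \<in> t" using side_level[OF st ont cP xP m(3)] by simp
      hence xst: "x \<in> s \<inter> t" using l(3) by simp
      have "p \<in> convex hull {v s, x}"
        unfolding convex_hull_2 using l by (intro CollectI exI[of _ l] exI[of _ "1 - l"]) auto
      moreover have "convex hull {v s, x} \<subseteq> convex hull (insert (v s) (s \<inter> t))"
        by (rule hull_mono) (use xst in auto)
      ultimately have "p \<in> convex hull (insert (v s) (s \<inter> t))" by blast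
      thus ?thesis unfolding T_def .
    qed
  qed
  have "aff_dim (s \<inter> t) < 1"
  proof -
    have f: "(s \<inter> t) face_of s"
      by (rule face_of_subset[OF face_of_Int[OF sf tf]]) (use sP in auto)
    have "s \<inter> t \<noteq> s"
    proof
      assume "s \<inter> t = s"
      hence "s \<subseteq> t" by auto
      hence "s face_of t" using face_of_subset[OF sf _ tP] by simp
      hence "aff_dim s < aff_dim t" using face_of_aff_dim_lt[OF ct] neq by blast
      thus False using sd td by simp
    qed
    thus ?thesis using face_of_aff_dim_lt[OF cs f] sd by simp
  qed
  hence "aff_dim T \<le> 1" unfolding T_def aff_dim_convex_hull
    using aff_dim_insert[of "v s" "s \<inter> t"] by (auto split: if_splits)
  hence "interior T = {}"
    using aff_dim_nonempty_interior[of T] by fastforce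
  moreover have "open U" unfolding U_def by auto
  ultimately have "U = {}" using UT interior_maximal by blast
  thus "interior (cap (v s) s) \<inter> interior (cap (v t) t) = {}" unfolding U_def .
qed

end
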